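(* Let $n\ge2$ and let $r_1,\ldots,r_{n-1}$ be positive reals with $r_i>\sum_{j>i}r_j$ for each $i$. For $\overline\theta=(\theta_1,\ldots,\theta_{n-1})$, $\theta_i\in\mathbb{R}/2\pi$, define $w_n=r_{n-1}$, $w_i=r_{i-1}+w_{i+1}\cos\theta_i$ for $1<i\le n-1$, $x_i=w_i\sin\theta_{i-1}$ for $1<i\le n$, and $x_1=w_2\cos\theta_1$. Then $\overline\theta\mapsto(x_1(\overline\theta),\ldots,x_n(\overline\theta))$ is an embedding of the torus $T^{n-1}$ in $\mathbb{R}^n$ satisfying $x_1(-\overline\theta)=x_1(\overline\theta)$ and $x_i(-\overline\theta)=-x_i(\overline\theta)$ for $2\le i\le n$. *)

theory Defs
  imports "HOL-Analysis.Analysis"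
begin

text \<open>Angles theta and radii r are indexed by 1..n-1 (functions nat => real; other
  values are irrelevant).  w n r theta i is the paper's w_i:
  w_n = r_(n-1) and w_i = r_(i-1) + w_(i+1) cos theta_i for i < n.\<close>

function w :: "nat \<Rightarrow> (nat \<Rightarrow> real) \<Rightarrow> (nat \<Rightarrow> real) \<Rightarrow> nat \<Rightarrow> real" where
  "w n r \<theta> i = (if n \<le> i then r (n - 1) else r (i - 1) + w n r \<theta> (Suc i) * cos (\<theta> i))"
  by pat_completeness auto
termination by (relation "Wellfounded.measure (\<lambda>(n, r, \<theta>, i). n - i)") auto

definition xc :: "nat \<Rightarrow> (nat \<Rightarrow> real) \<Rightarrow> (nat \<Rightarrow> real) \<Rightarrow> nat \<Rightarrow> real" where
  "xc n r \<theta> i = (if i = 1 then w n r \<theta> 2 * cos (\<theta> 1) else w n r \<theta> i * sin (\<theta> (i - 1)))"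

definition torus :: "nat \<Rightarrow> (nat \<Rightarrow> complex) topology" where
  "torus n = product_topology (\<lambda>j. top_of_set (sphere (0::complex) 1)) {1..n-1}"

definition Rn :: "nat \<Rightarrow> (nat \<Rightarrow> real) topology" where
  "Rn n = product_topology (\<lambda>i. euclideanreal) {1..n}"

definition torus_pt :: "nat \<Rightarrow> (nat \<Rightarrow> real) \<Rightarrow> nat \<Rightarrow> complex" where
  "torus_pt n \<theta> = restrict (\<lambda>j. cis (\<theta> j)) {1..n-1}"

end

theory Submission
  imports Defs
begin

function wz :: "nat \<Rightarrow> (nat \<Rightarrow> real) \<Rightarrow> (nat \<Rightarrow> complex) \<Rightarrow> nat \<Rightarrow> real" where
  "wz n r z i = (if n \<le> i then r (n - 1) else r (i - 1) + wz n r z (Suc i) * Re (z i))"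
  by pat_completeness auto
termination by (relation "Wellfounded.measure (\<lambda>(n, r, z, i). n - i)") auto
declare wz.simps[simp del] w.simps[simp del]

function dw :: "nat \<Rightarrow> (nat \<Rightarrow> real) \<Rightarrow> (nat \<Rightarrow> real) \<Rightarrow> nat \<Rightarrow> nat \<Rightarrow> real" where
  "dw n r \<theta> j i = (if n \<le> i then 0 else dw n r \<theta> j (Suc i) * cos (\<theta> i)
      - (if j = i then w n r \<theta> (Suc i) * sin (\<theta> i) else 0))"
  by pat_completeness auto
termination by (relation "Wellfounded.measure (\<lambda>(n, r, \<theta>, j, i). n - i)") auto
declare dw.simps[simp del]

lemma wz_pt: "1 \<le> i \<Longrightarrow> wz n r (torus_pt n \<theta>) i = w n r \<theta> i"
proof (induction n r \<theta> i rule: w.induct)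
  case (1 n r \<theta> i)
  show ?case
    by (subst wz.simps, subst w.simps) (use 1 in \<open>auto simp: torus_pt_def restrict_def\<close>)
qed

lemma w_neg: "w n r (\<lambda>j. - \<theta> j) i = w n r \<theta> i"
proof (induction n r \<theta> i rule: w.induct)
  case (1 n r \<theta> i)
  show ?case
    by (subst w.simps, subst (2) w.simps) (use 1 in auto)
qed

lemma w_deriv: "((\<lambda>t. w n r (\<theta>(j:=t)) i) has_real_derivative dw n r \<theta> j i) (at (\<theta> j))"
proof (induction n r \<theta> i rule: w.induct)
  case (1 n r \<theta> i)
  have e: "(\<lambda>t. w n r (\<theta>(j:=t)) i) = (\<lambda>t. if n \<le> i then r (n - 1) else r (i - 1) + w n r (\<theta>(j:=t)) (Suc i) * cos ((\<theta>(j:=t)) i))"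
    by (rule ext, subst w.simps, rule refl)
  show ?case
  proof (cases "n \<le> i")
    case True
    then show ?thesis unfolding e by (subst dw.simps) simp
  next
    case False
    note IH = "1.IH"[OF False]
    show ?thesis
    proof (cases "j = i")
      case True
      have "((\<lambda>t. r (i - 1) + w n r (\<theta>(j:=t)) (Suc i) * cos t) has_real_derivative
         0 + (dw n r \<theta> j (Suc i) * cos (\<theta> j) + w n r (\<theta>(j:=\<theta> j)) (Suc i) * (- sin (\<theta> j)))) (at (\<theta> j))"
        using DERIV_add[OF DERIV_const[of "r (i - 1)"] DERIV_mult[OF IH DERIV_cos]] by (simp add: fun_upd_def mult.commute)
      then show ?thesis unfolding e using False True by (subst dw.simps) (simp add: algebra_simps)
    next
      case ne: False
      have "((\<lambda>t. r (i - 1) + w n r (\<theta>(j:=t)) (Suc i) * cos (\<theta> i)) has_real_derivative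
         0 + (dw n r \<theta> j (Suc i) * cos (\<theta> i))) (at (\<theta> j))"
        by (intro DERIV_add DERIV_const DERIV_cmult_right IH)
      then show ?thesis unfolding e using False ne by (subst dw.simps) (simp add: algebra_simps)
    qed
  qed
qed


lemma topspace_torus: "topspace (torus n) = PiE {1..n-1} (\<lambda>_. sphere (0::complex) 1)"
  by (simp add: torus_def)

lemma cont_proj: "j \<in> {1..n-1} \<Longrightarrow> continuous_map (torus n) euclidean (\<lambda>z. z j)"
proof -
  assume j: "j \<in> {1..n-1}"
  have "continuous_map (torus n) (top_of_set (sphere 0 1)) (\<lambda>z. z j)"
    unfolding torus_def by (rule continuous_map_product_projection[OF j])
  then show ?thesis by (simp add: continuous_map_in_subtopology)
qed

lemma cont_Re: "j \<in> {1..n-1} \<Longrightarrow> continuous_map (torus n) euclideanreal (\<lambda>z. Re (z j))"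
  using continuous_map_compose[OF cont_proj, of j n euclideanreal Re]
  by (simp add: o_def continuous_on_Re continuous_on_id)

lemma cont_Im: "j \<in> {1..n-1} \<Longrightarrow> continuous_map (torus n) euclideanreal (\<lambda>z. Im (z j))"
  using continuous_map_compose[OF cont_proj, of j n euclideanreal Im]
  by (simp add: o_def continuous_on_Im continuous_on_id)

lemma cont_wz: "1 \<le> i \<Longrightarrow> continuous_map (torus n) euclideanreal (\<lambda>z. wz n r z i)"
proof (induction "n - i" arbitrary: i)
  case 0
  then show ?case by (subst wz.simps) simp
next
  case (Suc k)
  then have "k = n - Suc i" "i < n" by auto
  with Suc have IH: "continuous_map (torus n) euclideanreal (\<lambda>z. wz n r z (Suc i))" by auto
  have e: "(\<lambda>z. wz n r z i) = (\<lambda>z. r (i - 1) + wz n r z (Suc i) * Re (z i))"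
    using \<open>i < n\<close> by (intro ext, subst wz.simps) simp
  show ?case unfolding e
    by (intro continuous_map_add continuous_map_real_mult IH cont_Re continuous_map_canonical_const)
       (use Suc.prems \<open>i < n\<close> in auto)
qed


lemma wz_bound:
  assumes rpos: "\<And>i. 1 \<le> i \<Longrightarrow> i \<le> n - 1 \<Longrightarrow> r i > 0"
    and z: "\<And>i. 1 \<le> i \<Longrightarrow> i \<le> n - 1 \<Longrightarrow> \<bar>Re (z i)\<bar> \<le> 1"
    and n: "n \<ge> 2"
  shows "2 \<le> i \<Longrightarrow> i \<le> n \<Longrightarrow> \<bar>wz n r z i\<bar> \<le> (\<Sum>j\<in>{i-1..n-1}. r j)"
proof (induction "n - i" arbitrary: i)
  case 0
  then have "i = n" by auto
  have "r (n-1) > 0" using rpos[of "n-1"] n by auto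
  then show ?case using \<open>i = n\<close> by (subst wz.simps) simp
next
  case (Suc k)
  then have "k = n - Suc i" "i < n" by auto
  have IH: "\<bar>wz n r z (Suc i)\<bar> \<le> (\<Sum>j\<in>{i..n-1}. r j)"
    using Suc.hyps(1)[of "Suc i"] \<open>k = n - Suc i\<close> \<open>i < n\<close> Suc.prems by auto
  have "\<bar>wz n r z i\<bar> = \<bar>r (i - 1) + wz n r z (Suc i) * Re (z i)\<bar>"
    using \<open>i < n\<close> by (subst wz.simps) simp
  also have "\<dots> \<le> \<bar>r (i - 1)\<bar> + \<bar>wz n r z (Suc i)\<bar> * \<bar>Re (z i)\<bar>"
    by (metis abs_mult abs_triangle_ineq)
  also have "\<dots> \<le> r (i - 1) + (\<Sum>j\<in>{i..n-1}. r j) * 1"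
  proof -
    have "\<bar>wz n r z (Suc i)\<bar> * \<bar>Re (z i)\<bar> \<le> (\<Sum>j\<in>{i..n-1}. r j) * 1"
      using IH z[of i] Suc.prems \<open>i < n\<close> by (intro mult_mono) auto
    moreover have "r (i - 1) > 0" using rpos[of "i-1"] Suc.prems \<open>i < n\<close> by auto
    ultimately show ?thesis by simp
  qed
  also have "\<dots> = (\<Sum>j\<in>{i-1..n-1}. r j)"
  proof -
    have "{i-1..n-1} = insert (i-1) {i..n-1}" using Suc.prems \<open>i < n\<close> by auto
    then show ?thesis using Suc.prems by simp
  qed
  finally show ?case .
qed

lemma wz_pos:
  assumes rpos: "\<And>i. 1 \<le> i \<Longrightarrow> i \<le> n - 1 \<Longrightarrow> r i > 0"
    and rdom: "\<And>i. 1 \<le> i \<Longrightarrow> i \<le> n - 1 \<Longrightarrow> r i > (\<Sum>j\<in>{i<..n-1}. r j)"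
    and z: "\<And>i. 1 \<le> i \<Longrightarrow> i \<le> n - 1 \<Longrightarrow> \<bar>Re (z i)\<bar> \<le> 1"
    and n: "n \<ge> 2"
    and i: "2 \<le> i" "i \<le> n"
  shows "wz n r z i > 0"
proof (cases "i = n")
  case True
  have "r (n-1) > 0" using rpos[of "n-1"] n by auto
  then show ?thesis using True by (subst wz.simps) simp
next
  case False
  then have "i < n" using i by auto
  have B: "\<bar>wz n r z (Suc i)\<bar> \<le> (\<Sum>j\<in>{i..n-1}. r j)"
    using wz_bound[OF rpos z n, where i="Suc i"] i \<open>i < n\<close> by auto
  have "\<bar>wz n r z (Suc i) * Re (z i)\<bar> \<le> \<bar>wz n r z (Suc i)\<bar>"
    using z[of i] i \<open>i < n\<close> by (simp add: abs_mult mult_left_le)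
  moreover have "{i - 1<..n - 1} = {i..n-1}" using i by auto
  then have "r (i - 1) > (\<Sum>j\<in>{i..n-1}. r j)" using rdom[of "i-1"] i \<open>i < n\<close> by auto
  moreover have "wz n r z i = r (i - 1) + wz n r z (Suc i) * Re (z i)"
    using \<open>i < n\<close> by (subst wz.simps) simp
  ultimately show ?thesis using B by linarith
qed


definition Xz :: "nat \<Rightarrow> (nat \<Rightarrow> real) \<Rightarrow> (nat \<Rightarrow> complex) \<Rightarrow> nat \<Rightarrow> real" where
  "Xz n r z i = (if i = 1 then wz n r z 2 * Re (z 1) else wz n r z i * Im (z (i - 1)))"

lemma Re_le1: "z \<in> topspace (torus n) \<Longrightarrow> 1 \<le> i \<Longrightarrow> i \<le> n - 1 \<Longrightarrow> \<bar>Re (z i)\<bar> \<le> 1"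
  using abs_Re_le_cmod[of "z i"] by (auto simp: topspace_torus PiE_iff)

lemma inj_core:
  assumes rpos: "\<And>i. 1 \<le> i \<Longrightarrow> i \<le> n - 1 \<Longrightarrow> r i > 0"
    and rdom: "\<And>i. 1 \<le> i \<Longrightarrow> i \<le> n - 1 \<Longrightarrow> r i > (\<Sum>j\<in>{i<..n-1}. r j)"
    and n: "n \<ge> 2"
    and z: "z \<in> topspace (torus n)" and z': "z' \<in> topspace (torus n)"
    and X: "\<And>i. 1 \<le> i \<Longrightarrow> i \<le> n \<Longrightarrow> Xz n r z i = Xz n r z' i"
  shows "z = z'"
proof -
  define Zc where "Zc = (\<lambda>z k. complex_of_real (wz n r z (Suc k)) * z k)"
  have nz: "norm (z k) = 1" "norm (z' k) = 1" if "1 \<le> k" "k \<le> n - 1" for k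
    using z z' that by (auto simp: topspace_torus PiE_iff)
  have pos: "wz n r z k > 0" "wz n r z' k > 0" if "2 \<le> k" "k \<le> n" for k
    using wz_pos[OF rpos rdom _ n that] Re_le1[OF z] Re_le1[OF z'] by auto
  have normZ: "norm (Zc y k) = wz n r y (Suc k)" if "y = z \<or> y = z'" "1 \<le> k" "k \<le> n - 1" for y k
  proof -
    have "Suc k \<le> n" using that n by auto
    then show ?thesis
      using that nz[OF that(2,3)] pos[of "Suc k"] by (auto simp: Zc_def norm_mult)
  qed
  have claim: "1 \<le> k \<longrightarrow> k \<le> n - 1 \<longrightarrow> Zc z k = Zc z' k" for k
  proof (induction k)
    case 0 then show ?case by simp
  next
    case (Suc k)
    show ?case
    proof (intro impI)
      assume k: "1 \<le> Suc k" "Suc k \<le> n - 1"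
      show "Zc z (Suc k) = Zc z' (Suc k)"
      proof (cases "k = 0")
        case True
        have "Xz n r z 1 = Xz n r z' 1" "Xz n r z 2 = Xz n r z' 2" using X n by auto
        then show ?thesis using True
          by (auto simp: Zc_def Xz_def complex_eq_iff numeral_2_eq_2)
      next
        case False
        then have IH: "Zc z k = Zc z' k" using Suc.IH k by auto
        have W: "wz n r z (Suc k) = wz n r z' (Suc k)"
          using normZ[of z k] normZ[of z' k] IH False k by auto
        have e: "wz n r y (Suc k) = r k + wz n r y (Suc (Suc k)) * Re (y (Suc k))" for y
          using k n by (subst wz.simps) auto
        have "Xz n r z (Suc (Suc k)) = Xz n r z' (Suc (Suc k))" using X k by auto
        then show ?thesis using W e[of z] e[of z']
          by (auto simp: Zc_def Xz_def complex_eq_iff)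
      qed
    qed
  qed
  have "z k = z' k" if "k \<in> {1..n-1}" for k
  proof -
    have "Zc z k = Zc z' k" using claim that by auto
    moreover have "wz n r z (Suc k) = wz n r z' (Suc k)"
      using normZ[of z k] normZ[of z' k] that calculation by auto
    moreover have "wz n r z (Suc k) > 0" using pos[of "Suc k"] that by auto
    ultimately show ?thesis by (auto simp: Zc_def)
  qed
  moreover have "z \<in> extensional {1..n-1}" "z' \<in> extensional {1..n-1}"
    using z z' by (auto simp: topspace_torus PiE_iff)
  ultimately show ?thesis by (intro extensionalityI) auto
qed


definition Dm :: "nat \<Rightarrow> (nat \<Rightarrow> real) \<Rightarrow> (nat \<Rightarrow> real) \<Rightarrow> nat \<Rightarrow> nat \<Rightarrow> real" where
  "Dm n r \<theta> i j = (if i = 1 then dw n r \<theta> j 2 * cos (\<theta> 1) - (if j = 1 then w n r \<theta> 2 * sin (\<theta> 1) else 0)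
     else dw n r \<theta> j i * sin (\<theta> (i-1)) + (if j = i - 1 then w n r \<theta> i * cos (\<theta> (i-1)) else 0))"

lemma xc_deriv: "((\<lambda>t. xc n r (\<theta>(j:=t)) i) has_real_derivative Dm n r \<theta> i j) (at (\<theta> j))"
proof (cases "i = 1")
  case True
  show ?thesis
  proof (cases "j = 1")
    case j: True
    have "((\<lambda>t. w n r (\<theta>(j:=t)) 2 * cos t) has_real_derivative
        dw n r \<theta> j 2 * cos (\<theta> j) + w n r (\<theta>(j:=\<theta> j)) 2 * (- sin (\<theta> j))) (at (\<theta> j))"
      using DERIV_mult[OF w_deriv[of n r \<theta> j 2] DERIV_cos[of "\<theta> j"]] by (simp add: fun_upd_def mult.commute)
    then show ?thesis using True j by (simp add: xc_def Dm_def algebra_simps fun_upd_def)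
  next
    case j: False
    have "((\<lambda>t. w n r (\<theta>(j:=t)) 2 * cos (\<theta> 1)) has_real_derivative
        dw n r \<theta> j 2 * cos (\<theta> 1)) (at (\<theta> j))"
      by (rule DERIV_cmult_right[OF w_deriv])
    then show ?thesis using True j by (simp add: xc_def Dm_def algebra_simps)
  qed
next
  case False
  show ?thesis
  proof (cases "j = i - 1")
    case j: True
    have "((\<lambda>t. w n r (\<theta>(j:=t)) i * sin t) has_real_derivative
        dw n r \<theta> j i * sin (\<theta> j) + w n r (\<theta>(j:=\<theta> j)) i * cos (\<theta> j)) (at (\<theta> j))"
      using DERIV_mult[OF w_deriv[of n r \<theta> j i] DERIV_sin[of "\<theta> j"]] by (simp add: fun_upd_def mult.commute)
    then show ?thesis using False j by (simp add: xc_def Dm_def algebra_simps)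
  next
    case j: False
    have "((\<lambda>t. w n r (\<theta>(j:=t)) i * sin (\<theta> (i-1))) has_real_derivative
        dw n r \<theta> j i * sin (\<theta> (i-1))) (at (\<theta> j))"
      by (rule DERIV_cmult_right[OF w_deriv])
    then show ?thesis using False j by (simp add: xc_def Dm_def algebra_simps)
  qed
qed

lemma rot0:
  fixes a b t :: real
  assumes "a * cos t - b * sin t = 0" "a * sin t + b * cos t = 0"
  shows "a = 0 \<and> b = 0"
proof -
  have s: "cos t * cos t + sin t * sin t = 1" by (rule sin_cos_squared_add3)
  have A0: "cos t * (a * cos t - b * sin t) + sin t * (a * sin t + b * cos t) = a * (cos t * cos t + sin t * sin t)"
    by algebra
  have B0: "cos t * (a * sin t + b * cos t) - sin t * (a * cos t - b * sin t) = b * (cos t * cos t + sin t * sin t)"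
    by algebra
  have A: "a = cos t * (a * cos t - b * sin t) + sin t * (a * sin t + b * cos t)" using A0 s by simp
  have B: "b = cos t * (a * sin t + b * cos t) - sin t * (a * cos t - b * sin t)" using B0 s by simp
  have "a = 0" using A assms by simp
  moreover have "b = 0" using B assms by (simp only: mult_zero_right)
  ultimately show ?thesis by simp
qed

lemma indep:
  assumes n: "n \<ge> 2" and wpos: "\<And>i. 2 \<le> i \<Longrightarrow> i \<le> n \<Longrightarrow> w n r \<theta> i > 0"
    and c: "\<forall>i\<in>{1..n}. (\<Sum>j=1..n-1. c j * Dm n r \<theta> i j) = 0"
  shows "\<forall>j\<in>{1..n-1}. c j = 0"
proof -
  define V where "V = (\<lambda>i. \<Sum>j=1..n-1. c j * dw n r \<theta> j i)"
  have Vrec: "V i = V (Suc i) * cos (\<theta> i) - c i * w n r \<theta> (Suc i) * sin (\<theta> i)"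
    if "1 \<le> i" "i < n" for i
  proof -
    have "V i = (\<Sum>j=1..n-1. c j * dw n r \<theta> j (Suc i) * cos (\<theta> i)
         - (if j = i then c j * (w n r \<theta> (Suc i) * sin (\<theta> i)) else 0))"
      unfolding V_def using that by (intro sum.cong refl, subst dw.simps) (simp add: algebra_simps)
    also have "\<dots> = V (Suc i) * cos (\<theta> i) - c i * (w n r \<theta> (Suc i) * sin (\<theta> i))"
      using that by (simp add: sum_subtractf V_def sum_distrib_right)
    finally show ?thesis by simp
  qed
  have R1: "(\<Sum>j=1..n-1. c j * Dm n r \<theta> 1 j) = V 2 * cos (\<theta> 1) - c 1 * w n r \<theta> 2 * sin (\<theta> 1)"
  proof -
    have "(\<Sum>j=1..n-1. c j * Dm n r \<theta> 1 j) = (\<Sum>j=1..n-1. c j * dw n r \<theta> j 2 * cos (\<theta> 1)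
         - (if j = 1 then c j * (w n r \<theta> 2 * sin (\<theta> 1)) else 0))"
      by (intro sum.cong refl) (simp add: Dm_def algebra_simps)
    also have "\<dots> = V 2 * cos (\<theta> 1) - c 1 * (w n r \<theta> 2 * sin (\<theta> 1))"
      using n by (simp add: sum_subtractf V_def sum_distrib_right)
    finally show ?thesis by simp
  qed
  have Ri: "(\<Sum>j=1..n-1. c j * Dm n r \<theta> i j) = V i * sin (\<theta> (i-1)) + c (i-1) * w n r \<theta> i * cos (\<theta> (i-1))"
    if "2 \<le> i" "i \<le> n" for i
  proof -
    have "i - 1 \<in> {1..n-1}" using that by auto
    have "(\<Sum>j=1..n-1. c j * Dm n r \<theta> i j) = (\<Sum>j=1..n-1. c j * dw n r \<theta> j i * sin (\<theta> (i-1))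
         + (if j = i - 1 then c j * (w n r \<theta> i * cos (\<theta> (i-1))) else 0))"
      using that by (intro sum.cong refl) (simp add: Dm_def algebra_simps)
    also have "\<dots> = V i * sin (\<theta> (i-1)) + c (i-1) * (w n r \<theta> i * cos (\<theta> (i-1)))"
      using that \<open>i - 1 \<in> {1..n-1}\<close> by (simp add: sum.distrib V_def sum_distrib_right)
    finally show ?thesis by simp
  qed
  have claim: "1 \<le> k \<longrightarrow> k \<le> n - 1 \<longrightarrow> V (Suc k) = 0 \<and> c k = 0" for k
  proof (induction k)
    case 0 then show ?case by simp
  next
    case (Suc k)
    show ?case
    proof (intro impI)
      assume k: "1 \<le> Suc k" "Suc k \<le> n - 1"
      have e1: "V (Suc (Suc k)) * cos (\<theta> (Suc k)) - (c (Suc k) * w n r \<theta> (Suc (Suc k))) * sin (\<theta> (Suc k)) = 0"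
      proof (cases "k = 0")
        case True
        then show ?thesis using R1 c n by (simp add: numeral_2_eq_2)
      next
        case False
        then have "V (Suc k) = 0" using Suc.IH k by auto
        then show ?thesis using Vrec[of "Suc k"] k n by simp
      qed
      have e2: "V (Suc (Suc k)) * sin (\<theta> (Suc k)) + (c (Suc k) * w n r \<theta> (Suc (Suc k))) * cos (\<theta> (Suc k)) = 0"
        using Ri[of "Suc (Suc k)"] c k n by auto
      have "V (Suc (Suc k)) = 0 \<and> c (Suc k) * w n r \<theta> (Suc (Suc k)) = 0"
        by (rule rot0[OF e1 e2])
      moreover have "w n r \<theta> (Suc (Suc k)) > 0" using wpos[of "Suc (Suc k)"] k n by auto
      ultimately show "V (Suc (Suc k)) = 0 \<and> c (Suc k) = 0" by auto
    qed
  qed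
  show ?thesis using claim by auto
qed


theorem mainTheorem11:
  fixes n :: nat and r :: "nat \<Rightarrow> real"
  assumes "n \<ge> 2"
    and "\<And>i. 1 \<le> i \<Longrightarrow> i \<le> n - 1 \<Longrightarrow> r i > 0"
    and "\<And>i. 1 \<le> i \<Longrightarrow> i \<le> n - 1 \<Longrightarrow> r i > (\<Sum>j\<in>{i<..n-1}. r j)"
  shows "(\<exists>G. embedding_map (torus n) (Rn n) G \<and>
            (\<forall>\<theta>. G (torus_pt n \<theta>) = restrict (xc n r \<theta>) {1..n}))
    \<and> (\<forall>\<theta>. \<exists>D. (\<forall>i\<in>{1..n}. \<forall>j\<in>{1..n-1}.
               ((\<lambda>t. xc n r (\<theta>(j := t)) i) has_real_derivative D i j) (at (\<theta> j)))
           \<and> (\<forall>c. (\<forall>i\<in>{1..n}. (\<Sum>j=1..n-1. c j * D i j) = 0) \<longrightarrow> (\<forall>j\<in>{1..n-1}. c j = 0)))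
    \<and> (\<forall>\<theta>. xc n r (\<lambda>j. - \<theta> j) 1 = xc n r \<theta> 1)
    \<and> (\<forall>\<theta>. \<forall>i\<in>{2..n}. xc n r (\<lambda>j. - \<theta> j) i = - xc n r \<theta> i)"
proof (intro conjI)
  note n = assms(1) and rpos = assms(2) and rdom = assms(3)
  define G where "G = (\<lambda>z. restrict (Xz n r z) {1..n})"
  have cont: "continuous_map (torus n) (Rn n) G"
    unfolding Rn_def continuous_map_componentwise
  proof (intro conjI ballI)
    show "G ` topspace (torus n) \<subseteq> extensional {1..n}" by (auto simp: G_def)
  next
    fix k assume k: "k \<in> {1..n}"
    have e: "(\<lambda>z. G z k) = (\<lambda>z. Xz n r z k)" using k by (auto simp: G_def)
    show "continuous_map (torus n) euclideanreal (\<lambda>z. G z k)"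
    proof (cases "k = 1")
      case True
      then show ?thesis unfolding e Xz_def
        using n by (simp, intro continuous_map_real_mult cont_wz cont_Re) auto
    next
      case False
      then show ?thesis unfolding e Xz_def
        using n k by (simp, intro continuous_map_real_mult cont_wz cont_Im) auto
    qed
  qed
  have comp: "compact_space (torus n)"
    unfolding torus_def
    by (rule compact_space_product_topology[THEN iffD2], rule disjI2)
       (auto intro: compact_space_subtopology simp: compactin_euclidean_iff)
  have haus: "Hausdorff_space (Rn n)"
    unfolding Rn_def by (simp add: Hausdorff_space_product_topology)
  have inj: "inj_on G (topspace (torus n))"
  proof (rule inj_onI)
    fix z z' assume z: "z \<in> topspace (torus n)" and z': "z' \<in> topspace (torus n)" and "G z = G z'"
    then have "Xz n r z i = Xz n r z' i" if "1 \<le> i" "i \<le> n" for i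
      using that by (metis G_def atLeastAtMost_iff restrict_apply')
    then show "z = z'" using inj_core[OF rpos rdom n z z'] by blast
  qed
  show "\<exists>G. embedding_map (torus n) (Rn n) G \<and>
            (\<forall>\<theta>. G (torus_pt n \<theta>) = restrict (xc n r \<theta>) {1..n})"
  proof (intro exI conjI allI)
    show "embedding_map (torus n) (Rn n) G"
      by (rule continuous_imp_embedding_map[OF cont comp haus inj])
  next
    fix \<theta>
    show "G (torus_pt n \<theta>) = restrict (xc n r \<theta>) {1..n}"
    proof (rule ext)
      fix i
      show "G (torus_pt n \<theta>) i = restrict (xc n r \<theta>) {1..n} i"
      proof (cases "i \<in> {1..n}")
        case True
        have tp: "\<And>j. j \<in> {1..n-1} \<Longrightarrow> torus_pt n \<theta> j = cis (\<theta> j)" by (simp add: torus_pt_def)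
        have "Xz n r (torus_pt n \<theta>) i = xc n r \<theta> i"
        proof (cases "i = 1")
          case True
          then show ?thesis using n tp[of 1] wz_pt[of 2 n r \<theta>] by (simp add: Xz_def xc_def)
        next
          case False
          then have "i - 1 \<in> {1..n-1}" using True by auto
          then show ?thesis using n True False tp[of "i-1"] wz_pt[of i n r \<theta>] by (simp add: Xz_def xc_def)
        qed
        then show ?thesis using True by (simp add: G_def)
      next
        case False
        then show ?thesis by (auto simp: G_def)
      qed
    qed
  qed
next
  show "\<forall>\<theta>. \<exists>D. (\<forall>i\<in>{1..n}. \<forall>j\<in>{1..n-1}.
               ((\<lambda>t. xc n r (\<theta>(j := t)) i) has_real_derivative D i j) (at (\<theta> j)))
           \<and> (\<forall>c. (\<forall>i\<in>{1..n}. (\<Sum>j=1..n-1. c j * D i j) = 0) \<longrightarrow> (\<forall>j\<in>{1..n-1}. c j = 0))"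
  proof (intro allI)
    fix \<theta>
    have wpos: "w n r \<theta> i > 0" if "2 \<le> i" "i \<le> n" for i
    proof -
      have "wz n r (torus_pt n \<theta>) i > 0"
        by (rule wz_pos[OF assms(2,3) _ assms(1) that]) (auto simp: torus_pt_def)
      then show ?thesis using wz_pt[of i n r \<theta>] that by simp
    qed
    have d: "\<forall>i\<in>{1..n}. \<forall>j\<in>{1..n-1}.
         ((\<lambda>t. xc n r (\<theta>(j := t)) i) has_real_derivative Dm n r \<theta> i j) (at (\<theta> j))"
      using xc_deriv by blast
    have l: "\<forall>c. (\<forall>i\<in>{1..n}. (\<Sum>j=1..n-1. c j * Dm n r \<theta> i j) = 0) \<longrightarrow> (\<forall>j\<in>{1..n-1}. c j = 0)"
      using indep[OF assms(1) wpos] by blast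
    show "\<exists>D. (\<forall>i\<in>{1..n}. \<forall>j\<in>{1..n-1}.
               ((\<lambda>t. xc n r (\<theta>(j := t)) i) has_real_derivative D i j) (at (\<theta> j)))
           \<and> (\<forall>c. (\<forall>i\<in>{1..n}. (\<Sum>j=1..n-1. c j * D i j) = 0) \<longrightarrow> (\<forall>j\<in>{1..n-1}. c j = 0))"
      using d l by blast
  qed
next
  show "\<forall>\<theta>. xc n r (\<lambda>j. - \<theta> j) 1 = xc n r \<theta> 1"
    by (simp add: xc_def w_neg)
next
  show "\<forall>\<theta>. \<forall>i\<in>{2..n}. xc n r (\<lambda>j. - \<theta> j) i = - xc n r \<theta> i"
    by (simp add: xc_def w_neg)
qed

end
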